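(* Let $\mathcal N$ be a finite ground set, $f:2^{\mathcal N}\to\mathbb R$ monotone and submodular, and $k\ge1$ an integer. Consider the algorithm: initialize $A\leftarrow\emptyset$; for each $u\in\mathcal N$ in turn, if $\Delta(u\mid A)\ge f(A)/k$ then $A\leftarrow A\cup\{u\}$; finally let $A'$ be the set of the last $k$ elements added to $A$ (or $A'=A$ if $|A|<k$). At termination of this algorithm, $f(A)\le2f(A')$.
   Context: $f$ is submodular if $f(T\cup\{x\})-f(T)\le f(S\cup\{x\})-f(S)$ for all $S\subseteq T\subseteq\mathcal N$, $x\notin T$; monotone if $f(S)\le f(T)$ for $S\subseteq T$. $\Delta(x\mid S)=f(S\cup\{x\})-f(S)$. *)

theory Defs
  imports Complex_Main
begin

definition monotone_set_fn :: "'a set \<Rightarrow> ('a set \<Rightarrow> real) \<Rightarrow> bool" where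
  "monotone_set_fn N f \<longleftrightarrow> (\<forall>S T. S \<subseteq> T \<longrightarrow> T \<subseteq> N \<longrightarrow> f S \<le> f T)"

definition submodular :: "'a set \<Rightarrow> ('a set \<Rightarrow> real) \<Rightarrow> bool" where
  "submodular N f \<longleftrightarrow> (\<forall>S T x. S \<subseteq> T \<longrightarrow> T \<subseteq> N \<longrightarrow> x \<in> N \<longrightarrow> x \<notin> T \<longrightarrow>
      f (T \<union> {x}) - f T \<le> f (S \<union> {x}) - f S)"

definition marginal :: "('a set \<Rightarrow> real) \<Rightarrow> 'a \<Rightarrow> 'a set \<Rightarrow> real" where
  "marginal f x S = f (S \<union> {x}) - f S"

text \<open>One step of the algorithm; the current set A is kept as the list of added elements,
  in order of addition.\<close>
definition alg_step :: "('a set \<Rightarrow> real) \<Rightarrow> nat \<Rightarrow> 'a list \<Rightarrow> 'a \<Rightarrow> 'a list" where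
  "alg_step f k L u = (if marginal f u (set L) \<ge> f (set L) / real k then L @ [u] else L)"

definition alg_run :: "('a set \<Rightarrow> real) \<Rightarrow> nat \<Rightarrow> 'a list \<Rightarrow> 'a list" where
  "alg_run f k us = foldl (alg_step f k) [] us"

definition last_k :: "nat \<Rightarrow> 'a list \<Rightarrow> 'a list" where
  "last_k k L = drop (length L - k) L"

end

theory Submission
  imports Defs
begin

lemma alg_run_snoc: "alg_run f k (xs @ [x]) = alg_step f k (alg_run f k xs) x"
  by (simp add: alg_run_def)

lemma alg_inv:
  assumes "distinct us"
  shows "distinct (alg_run f k us) \<and> set (alg_run f k us) \<subseteq> set us \<and>
    (\<forall>i<length (alg_run f k us). f (set (take i (alg_run f k us))) / real k
        \<le> marginal f (alg_run f k us ! i) (set (take i (alg_run f k us))))"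
  using assms
proof (induction us rule: rev_induct)
  case Nil
  then show ?case by (simp add: alg_run_def)
next
  case (snoc x xs)
  define L where "L = alg_run f k xs"
  from snoc have IH: "distinct L" "set L \<subseteq> set xs"
    "\<forall>i<length L. f (set (take i L)) / real k \<le> marginal f (L ! i) (set (take i L))"
    and xn: "x \<notin> set xs" by (auto simp: L_def)
  show ?case
  proof (cases "marginal f x (set L) \<ge> f (set L) / real k")
    case True
    then have e: "alg_run f k (xs @ [x]) = L @ [x]"
      by (simp add: alg_run_snoc alg_step_def L_def)
    have "\<forall>i<length (L @ [x]). f (set (take i (L @ [x]))) / real k
        \<le> marginal f ((L @ [x]) ! i) (set (take i (L @ [x])))"
    proof (intro allI impI)
      fix i assume "i < length (L @ [x])"
      then consider "i < length L" | "i = length L" by fastforce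
      then show "f (set (take i (L @ [x]))) / real k
        \<le> marginal f ((L @ [x]) ! i) (set (take i (L @ [x])))"
      proof cases
        case 1 then show ?thesis using IH(3) by (simp add: nth_append)
      next
        case 2 then show ?thesis using True by simp
      qed
    qed
    then show ?thesis using e IH xn by auto
  next
    case False
    then have e: "alg_run f k (xs @ [x]) = L"
      by (simp add: alg_run_snoc alg_step_def L_def)
    then show ?thesis using IH by auto
  qed
qed

lemma tail_bound:
  assumes mono: "monotone_set_fn N f" and sub: "submodular N f"
    and "distinct (B @ C)" and "set (B @ C) \<subseteq> N" and "k \<ge> 1"
    and cond: "\<forall>i<length C. f (set (B @ take i C)) / real k
        \<le> marginal f (C ! i) (set (B @ take i C))"
  shows "f (set (B @ C)) - f (set B) \<le> f (set C) - f {} \<and>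
         f (set (B @ C)) - f (set B) \<ge> real (length C) * f (set B) / real k"
  using assms(3,4) cond
proof (induction C rule: rev_induct)
  case Nil
  then show ?case by simp
next
  case (snoc c C)
  have IH: "f (set (B @ C)) - f (set B) \<le> f (set C) - f {} \<and>
         f (set (B @ C)) - f (set B) \<ge> real (length C) * f (set B) / real k"
  proof (rule snoc.IH)
    show "distinct (B @ C)" "set (B @ C) \<subseteq> N" using snoc.prems by auto
    show "\<forall>i<length C. f (set (B @ take i C)) / real k
        \<le> marginal f (C ! i) (set (B @ take i C))"
    proof (intro allI impI)
      fix i assume "i < length C"
      then show "f (set (B @ take i C)) / real k \<le> marginal f (C ! i) (set (B @ take i C))"
        using spec[OF snoc.prems(3), of i] by (simp add: nth_append)
    qed
  qed
  have c: "f (set (B @ C)) / real k \<le> marginal f c (set (B @ C))"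
    using spec[OF snoc.prems(3), of "length C"] by simp
  have cN: "c \<in> N" and cn: "c \<notin> set (B @ C)" and BCN: "set (B @ C) \<subseteq> N"
    using snoc.prems by auto
  have m1: "f (set B) \<le> f (set (B @ C))"
    using mono BCN unfolding monotone_set_fn_def by auto
  have "f (set B) / real k \<le> f (set (B @ C)) / real k"
    using m1 assms(5) by (simp add: divide_right_mono)
  with c have low: "f (set B) / real k \<le> marginal f c (set (B @ C))" by linarith
  have up: "marginal f c (set (B @ C)) \<le> marginal f c (set C)"
    using sub BCN cN cn unfolding submodular_def marginal_def by auto
  have eq1: "set (B @ C @ [c]) = set (B @ C) \<union> {c}" by auto
  have eq2: "set (C @ [c]) = set C \<union> {c}" by auto
  have "real (length (C @ [c])) * f (set B) / real k
      = real (length C) * f (set B) / real k + f (set B) / real k"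
    by (simp add: add_divide_distrib algebra_simps)
  then show ?case using IH low up unfolding marginal_def eq1 eq2
    by (simp only: append_assoc[symmetric] eq1) linarith
qed

theorem lemma10:
  fixes N :: "'a set" and f :: "'a set \<Rightarrow> real" and k :: nat and us :: "'a list"
  assumes "finite N"
    and "monotone_set_fn N f"
    and "submodular N f"
    and "\<forall>S. S \<subseteq> N \<longrightarrow> f S \<ge> 0"
    and "k \<ge> 1"
    and "distinct us" and "set us = N"
  shows "f (set (alg_run f k us)) \<le> 2 * f (set (last_k k (alg_run f k us)))"
proof -
  define L where "L = alg_run f k us"
  have I: "distinct L" "set L \<subseteq> N"
    "\<forall>i<length L. f (set (take i L)) / real k \<le> marginal f (L ! i) (set (take i L))"
    using alg_inv[OF assms(6), of f k] assms(7) by (auto simp: L_def)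
  show ?thesis
  proof (cases "length L \<le> k")
    case True
    then have "last_k k L = L" by (simp add: last_k_def)
    moreover have "f (set L) \<ge> 0" using assms(4) I(2) by auto
    ultimately show ?thesis by (simp add: L_def)
  next
    case False
    define B where "B = take (length L - k) L"
    define C where "C = drop (length L - k) L"
    have LBC: "L = B @ C" by (simp add: B_def C_def)
    have lc: "length C = k" using False by (simp add: C_def)
    have lk: "last_k k L = C" by (simp add: last_k_def C_def)
    have lB: "length B = length L - k" using False by (simp add: B_def)
    have cond: "\<forall>i<length C. f (set (B @ take i C)) / real k
        \<le> marginal f (C ! i) (set (B @ take i C))"
    proof (intro allI impI)
      fix i assume i: "i < length C"
      have t: "take (length B + i) L = B @ take i C" by (simp add: LBC)
      have n: "L ! (length B + i) = C ! i" by (simp add: LBC nth_append)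
      have "length B + i < length L" using i by (simp add: LBC)
      then show "f (set (B @ take i C)) / real k \<le> marginal f (C ! i) (set (B @ take i C))"
        using spec[OF I(3), of "length B + i"] t n by simp
    qed
    have T: "f (set (B @ C)) - f (set B) \<le> f (set C) - f {} \<and>
         f (set (B @ C)) - f (set B) \<ge> real (length C) * f (set B) / real k"
      using tail_bound[OF assms(2,3) _ _ assms(5) cond] I LBC by auto
    have "real (length C) * f (set B) / real k = f (set B)" using lc assms(5) by simp
    moreover have "f {} \<ge> 0" using assms(4) by auto
    ultimately show ?thesis using T LBC lk by (simp add: L_def[symmetric])
  qed
qed

end
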